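(* Let $K\subset\mathbb{R}^n$ be a proper cone and $\mathcal{M}\subset\mathbb{R}^{n\times n}$ compact and nonempty. (i) If $\mathcal{S}=\mathcal{S}(\mathcal{M},\mathbb{N})\subset\pi(K)$, then $\mathcal{S}$ is $K$-irreducible if and only if $\operatorname{conv}\mathcal{M}$ contains a $K$-irreducible element. (ii) If $\mathcal{S}=\mathcal{S}(\mathcal{M},\mathbb{R}_+)\subset\pi(K)$, then $\mathcal{S}$ is $K$-irreducible if and only if for every nontrivial face $F$ of $K$ there exists $A\in\mathcal{M}$ with $A\,\operatorname{span}F\not\subset\operatorname{span}F$. If moreover $\mathcal{M}\subset\pi(K)+\Lambda$ with $\Lambda=\{\lambda I:\lambda\in\mathbb{R}\}$, this is equivalent to the existence of an irreducible exponentially $K$-nonnegative matrix $A\in\operatorname{conv}\mathcal{M}$ (i.e. one for which no nontrivial face $F$ has $A\,\operatorname{span}F\subset\operatorname{span}F$).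
   Context: A proper cone $K\subset\mathbb{R}^n$ is a nonempty set with $rK\subset K$ for all $r>0$ which is convex, pointed, closed and has nonempty interior. Write $x\ge_K y$ if $x-y\in K$. A face of $K$ is a cone $F\subseteq K$ such that $x\in F$ and $x\ge_K y\ge_K0$ imply $y\in F$; $\{0\}$ and $K$ are the trivial faces. $\pi(K)=\{A: AK\subset K\}$; $A\in\pi(K)$ is $K$-irreducible if no nontrivial face $F$ satisfies $AF\subset F$. A matrix $A$ is exponentially $K$-nonnegative if $e^{At}K\subset K$ for all $t\ge0$. Discrete semigroup $\mathcal{S}(\mathcal{M},\mathbb{N})=\bigcup_{t\in\mathbb{N}}\mathcal{S}_t$ with $\mathcal{S}_0=\{I\}$ and $\mathcal{S}_t=\{A_{t-1}\cdots A_0: A_s\in\mathcal{M}\}$. Continuous semigroup $\mathcal{S}(\mathcal{M},\mathbb{R}_+)=\bigcup_{t\ge0}\mathcal{S}_t$ with $\mathcal{S}_0=\{I\}$ and $\mathcal{S}_t=\{\Phi_\sigma(t):\sigma:[0,t]\to\mathcal{M}\text{ measurable}\}$, where $\dot\Phi_\sigma(s)=\sigma(s)\Phi_\sigma(s)$, $\Phi_\sigma(0)=I$. A semigroup $\mathcal{S}=\bigcup_t\mathcal{S}_t\subset\pi(K)$ is called $K$-irreducible if there exists $t>0$ such that $\operatorname{conv}\mathcal{S}_t$ contains a $K$-irreducible element. *)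

theory Defs
  imports "HOL-Analysis.Analysis"
begin

type_synonym 'n mat = "real ^ 'n ^ 'n"

definition proper_cone :: "(real ^ 'n) set \<Rightarrow> bool" where
  "proper_cone K \<longleftrightarrow> K \<noteq> {} \<and> (\<forall>r>0. \<forall>x\<in>K. r *\<^sub>R x \<in> K) \<and> convex K
     \<and> (\<forall>x. x \<in> K \<and> - x \<in> K \<longrightarrow> x = 0) \<and> closed K \<and> interior K \<noteq> {}"

definition cone_ge :: "(real ^ 'n) set \<Rightarrow> real ^ 'n \<Rightarrow> real ^ 'n \<Rightarrow> bool" where
  "cone_ge K x y \<longleftrightarrow> x - y \<in> K"

definition cone_face :: "(real ^ 'n) set \<Rightarrow> (real ^ 'n) set \<Rightarrow> bool" where
  "cone_face K F \<longleftrightarrow> F \<noteq> {} \<and> F \<subseteq> K \<and> (\<forall>r>0. \<forall>x\<in>F. r *\<^sub>R x \<in> F) \<and> convex F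
     \<and> (\<forall>x y. x \<in> F \<and> cone_ge K x y \<and> cone_ge K y 0 \<longrightarrow> y \<in> F)"

definition nontrivial_face :: "(real ^ 'n) set \<Rightarrow> (real ^ 'n) set \<Rightarrow> bool" where
  "nontrivial_face K F \<longleftrightarrow> cone_face K F \<and> F \<noteq> {0} \<and> F \<noteq> K"

definition pi_cone :: "(real ^ ('n::finite)) set \<Rightarrow> 'n mat set" where
  "pi_cone K = {A. \<forall>x\<in>K. A *v x \<in> K}"

definition K_irreducible :: "(real ^ ('n::finite)) set \<Rightarrow> 'n mat \<Rightarrow> bool" where
  "K_irreducible K A \<longleftrightarrow> A \<in> pi_cone K \<and>
     \<not> (\<exists>F. nontrivial_face K F \<and> (\<lambda>x. A *v x) ` F \<subseteq> F)"

primrec mpow :: "('n::finite) mat \<Rightarrow> nat \<Rightarrow> 'n mat" where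
  "mpow A 0 = mat 1"
| "mpow A (Suc k) = A ** mpow A k"

definition mexp :: "('n::finite) mat \<Rightarrow> 'n mat" where
  "mexp A = (\<Sum>k. (1 / fact k) *\<^sub>R mpow A k)"

definition exp_K_nonneg :: "(real ^ 'n) set \<Rightarrow> ('n::finite) mat \<Rightarrow> bool" where
  "exp_K_nonneg K A \<longleftrightarrow> (\<forall>t\<ge>0. \<forall>x\<in>K. mexp (t *\<^sub>R A) *v x \<in> K)"

primrec dsg_step :: "('n::finite) mat set \<Rightarrow> nat \<Rightarrow> 'n mat set" where
  "dsg_step M 0 = {mat 1}"
| "dsg_step M (Suc t) = {A ** B | A B. A \<in> M \<and> B \<in> dsg_step M t}"

definition dsg :: "('n::finite) mat set \<Rightarrow> 'n mat set" where
  "dsg M = (\<Union>t. dsg_step M t)"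

definition dsg_irreducible :: "(real ^ ('n::finite)) set \<Rightarrow> 'n mat set \<Rightarrow> bool" where
  "dsg_irreducible K M \<longleftrightarrow> (\<exists>t::nat>0. \<exists>A\<in>convex hull (dsg_step M t). K_irreducible K A)"

(* continuous semigroup: S_t = {\<Phi>_\<sigma>(t)}, \<sigma> : [0,t] \<rightarrow> M measurable, and \<Phi>_\<sigma> the
   (Caratheodory, i.e. absolutely continuous) solution of \<Phi>' = \<sigma> \<Phi>, \<Phi>(0) = I,
   written in integral form \<Phi>(s) = I + \<integral>_0^s \<sigma>(r) \<Phi>(r) dr *)
definition csg_step :: "('n::finite) mat set \<Rightarrow> real \<Rightarrow> 'n mat set" where
  "csg_step M t = {\<Phi> t | \<sigma> \<Phi>. \<sigma> measurable_on {0..t} \<and> (\<forall>s\<in>{0..t}. \<sigma> s \<in> M)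
       \<and> continuous_on {0..t} \<Phi>
       \<and> (\<forall>s\<in>{0..t}. ((\<lambda>r. \<sigma> r ** \<Phi> r) has_integral (\<Phi> s - mat 1)) {0..s})}"

definition csg :: "('n::finite) mat set \<Rightarrow> 'n mat set" where
  "csg M = (\<Union>t\<in>{0..}. csg_step M t)"

definition csg_irreducible :: "(real ^ 'n) set \<Rightarrow> ('n::finite) mat set \<Rightarrow> bool" where
  "csg_irreducible K M \<longleftrightarrow> (\<exists>t>0. \<exists>A\<in>convex hull (csg_step M t). K_irreducible K A)"

end

theory Submission
  imports Defs "HOL-Computational_Algebra.Formal_Power_Series"
begin


typedef (overloaded) 'a bop = "UNIV :: ('a::euclidean_space \<Rightarrow>\<^sub>L 'a) set"
  morphisms bl Bop by auto

setup_lifting type_definition_bop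

instantiation bop :: (euclidean_space) real_normed_vector
begin
lift_definition norm_bop :: "'a bop \<Rightarrow> real" is norm .
lift_definition minus_bop :: "'a bop \<Rightarrow> 'a bop \<Rightarrow> 'a bop" is "(-)" .
lift_definition plus_bop :: "'a bop \<Rightarrow> 'a bop \<Rightarrow> 'a bop" is "(+)" .
lift_definition uminus_bop :: "'a bop \<Rightarrow> 'a bop" is "uminus" .
lift_definition zero_bop :: "'a bop" is "0" .
lift_definition scaleR_bop :: "real \<Rightarrow> 'a bop \<Rightarrow> 'a bop" is "scaleR" .
definition dist_bop :: "'a bop \<Rightarrow> 'a bop \<Rightarrow> real"
  where "dist_bop a b = norm (a - b)"
definition uniformity_bop :: "('a bop \<times> 'a bop) filter" where
  "uniformity_bop = (INF e\<in>{0 <..}. principal {(x, y). dist x y < e})"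
definition open_bop :: "'a bop set \<Rightarrow> bool"
  where "open_bop S = (\<forall>x\<in>S. \<forall>\<^sub>F (x', y) in uniformity. x' = x \<longrightarrow> y \<in> S)"
definition sgn_bop :: "'a bop \<Rightarrow> 'a bop"
  where "sgn_bop x = scaleR (inverse (norm x)) x"
instance
  apply standard
  unfolding dist_bop_def open_bop_def sgn_bop_def uniformity_bop_def
  apply (rule refl | (transfer, force simp: norm_triangle_ineq algebra_simps))+
  done
end

instantiation bop :: (euclidean_space) ring_1
begin
lift_definition times_bop :: "'a bop \<Rightarrow> 'a bop \<Rightarrow> 'a bop" is "(o\<^sub>L)" .
lift_definition one_bop :: "'a bop" is "id_blinfun" .
instance
proof
  fix a b c :: "'a bop"
  show "a * b * c = a * (b * c)" by transfer (auto intro!: blinfun_eqI)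
  show "1 * a = a" by transfer (auto intro!: blinfun_eqI)
  show "a * 1 = a" by transfer (auto intro!: blinfun_eqI)
  show "(a + b) * c = a * c + b * c" by transfer (auto intro!: blinfun_eqI simp: blinfun.bilinear_simps)
  show "a * (b + c) = a * b + a * c" by transfer (auto intro!: blinfun_eqI simp: blinfun.bilinear_simps)
  show "(0::'a bop) \<noteq> 1"
  proof transfer
    obtain v :: 'a where "v \<noteq> 0" using nonzero_Basis SOME_Basis by blast
    then show "(0::'a \<Rightarrow>\<^sub>L 'a) \<noteq> id_blinfun"
      by (metis blinfun_apply_id_blinfun zero_blinfun.rep_eq)
  qed
qed
end

instance bop :: (euclidean_space) real_normed_algebra_1
proof
  fix a b :: "'a bop" and r :: real
  show "r *\<^sub>R a * b = r *\<^sub>R (a * b)" by transfer (auto intro!: blinfun_eqI simp: blinfun.bilinear_simps)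
  show "a * r *\<^sub>R b = r *\<^sub>R (a * b)" by transfer (auto intro!: blinfun_eqI simp: blinfun.bilinear_simps)
  show "norm (a * b) \<le> norm a * norm b" by transfer (rule norm_blinfun_compose)
  show "norm (1::'a bop) = 1" by transfer simp
qed

lemma dist_bop_bl: "dist x y = dist (bl x) (bl y)"
  unfolding dist_bop_def dist_norm by transfer simp

instance bop :: (euclidean_space) banach
proof
  fix X :: "nat \<Rightarrow> 'a bop"
  assume "Cauchy X"
  then have "Cauchy (\<lambda>n. bl (X n))" unfolding Cauchy_def dist_bop_bl by simp
  then obtain L where L: "(\<lambda>n. bl (X n)) \<longlonglongrightarrow> L" using Cauchy_convergent_iff convergent_def by blast
  have "X \<longlonglongrightarrow> Bop L"
    using L unfolding lim_sequentially dist_bop_bl by (simp add: Bop_inverse)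
  then show "convergent X" by (auto simp: convergent_def)
qed




definition app :: "'a::euclidean_space bop \<Rightarrow> 'a \<Rightarrow> 'a" where
  "app L v = blinfun_apply (bl L) v"

lemma app_mult: "app (x*y) v = app x (app y v)"
  by (simp add: app_def times_bop.rep_eq)
lemma app_one[simp]: "app 1 v = v"
  by (simp add: app_def one_bop.rep_eq)
lemma app_add_left: "app (x + y) v = app x v + app y v"
  by (simp add: app_def plus_bop.rep_eq blinfun.bilinear_simps)
lemma app_diff_left: "app (x - y) v = app x v - app y v"
  by (simp add: app_def minus_bop.rep_eq blinfun.bilinear_simps)
lemma app_scaleR_left: "app (r *\<^sub>R x) v = r *\<^sub>R app x v"
  by (simp add: app_def scaleR_bop.rep_eq blinfun.bilinear_simps)
lemma app_zero_left[simp]: "app 0 v = 0"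
  by (simp add: app_def zero_bop.rep_eq)
lemma bounded_linear_app: "bounded_linear (app L)"
  unfolding app_def by (rule blinfun.bounded_linear_right)
lemma linear_app: "linear (app L)"
  using bounded_linear_app bounded_linear.linear by blast
lemma norm_app: "norm (app L v) \<le> norm L * norm v"
  unfolding app_def norm_bop.rep_eq by (rule norm_blinfun)
lemma bop_eqI: "(\<And>v. app x v = app y v) \<Longrightarrow> x = y"
  unfolding app_def by (metis blinfun_eqI bl_inject)

lemma bounded_linear_app_left: "bounded_linear (\<lambda>L. app L v)"
proof (rule bounded_linear_intro[where K="norm v"])
  show "app (x + y) v = app x v + app y v" for x y by (rule app_add_left)
  show "app (r *\<^sub>R x) v = r *\<^sub>R app x v" for r x by (rule app_scaleR_left)
  show "norm (app x v) \<le> norm x * norm v" for x by (rule norm_app)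
qed

lemma tendsto_app_left: "(f \<longlongrightarrow> L) F \<Longrightarrow> ((\<lambda>x. app (f x) v) \<longlongrightarrow> app L v) F"
  using bounded_linear.tendsto[OF bounded_linear_app_left] .

lemma sums_app: "(f sums L) \<Longrightarrow> ((\<lambda>k. app (f k) v) sums app L v)"
  using bounded_linear.sums[OF bounded_linear_app_left] .

lemma app_power_Suc: "app (x ^ Suc k) v = app x (app (x^k) v)"
  by (simp add: app_mult)

definition m2b :: "real^'n^'n \<Rightarrow> (real^'n::finite) bop" where
  "m2b A = Bop (Blinfun (\<lambda>v. A *v v))"

lemma bl_mvec: "bounded_linear (\<lambda>v. (A::real^'n^'n) *v v)"
  by (simp add: linear_conv_bounded_linear)

lemma app_m2b[simp]: "app (m2b A) v = A *v v"
  unfolding app_def m2b_def using bl_mvec[of A]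
  by (simp add: Bop_inverse bounded_linear_Blinfun_apply)

definition b2m :: "(real^'n::finite) bop \<Rightarrow> real^'n^'n" where
  "b2m L = matrix (app L)"

lemma b2m_m2b[simp]: "b2m (m2b A) = A"
proof -
  have "app (m2b A) = (\<lambda>v. A *v v)" by (rule ext) simp
  then show ?thesis unfolding b2m_def by simp
qed

lemma app_b2m: "b2m L *v v = app L v"
  unfolding b2m_def using linear_app[of L] by (simp add: matrix_works linear_matrix_vector_mul_eq)

lemma m2b_b2m[simp]: "m2b (b2m L) = L"
  by (rule bop_eqI) (simp add: app_b2m)

lemma m2b_inj: "m2b A = m2b B \<longleftrightarrow> A = B"
  by (metis b2m_m2b)

lemma m2b_mult: "m2b (A ** B) = m2b A * m2b B"
  by (rule bop_eqI) (simp add: app_mult matrix_vector_mul_assoc)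
lemma m2b_one: "m2b (mat 1) = 1"
  by (rule bop_eqI) simp
lemma m2b_add: "m2b (A + B) = m2b A + m2b B"
  by (rule bop_eqI) (simp add: app_add_left matrix_vector_mult_add_rdistrib)
lemma m2b_diff: "m2b (A - B) = m2b A - m2b B"
  by (rule bop_eqI) (simp add: app_diff_left matrix_vector_mult_diff_rdistrib)
lemma m2b_scaleR: "m2b (r *\<^sub>R A) = r *\<^sub>R m2b A"
  by (rule bop_eqI) (simp add: app_scaleR_left scaleR_matrix_vector_assoc)

lemma b2m_add: "b2m (x + y) = b2m x + b2m y"
  by (metis m2b_add m2b_b2m m2b_inj)
lemma b2m_scaleR: "b2m (r *\<^sub>R x) = r *\<^sub>R b2m x"
  by (metis m2b_scaleR m2b_b2m m2b_inj)
lemma b2m_mult: "b2m (x * y) = b2m x ** b2m y"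
  by (metis m2b_mult m2b_b2m m2b_inj)

lemma linear_m2b: "linear m2b"
  by (rule linearI) (simp_all add: m2b_add m2b_scaleR)
lemma bounded_linear_m2b: "bounded_linear (m2b :: real^'n^'n \<Rightarrow> (real^'n::finite) bop)"
  using linear_m2b linear_conv_bounded_linear by blast

lemma b2m_nth: "b2m L $ i $ j = app L (axis j 1) $ i"
  by (simp add: b2m_def matrix_def)

lemma bounded_linear_b2m: "bounded_linear (b2m :: (real^'n::finite) bop \<Rightarrow> real^'n^'n)"
proof (rule bounded_linear_intro[where K="real (CARD('n)) * real (CARD('n))"])
  show "b2m (x + y) = b2m x + b2m y" for x y by (rule b2m_add)
  show "b2m (r *\<^sub>R x) = r *\<^sub>R b2m x" for r x by (rule b2m_scaleR)
  fix x :: "(real^'n) bop"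
  have "norm (b2m x) \<le> (\<Sum>i\<in>UNIV. norm (b2m x $ i))"
    by (simp add: norm_vec_def L2_set_le_sum)
  also have "\<dots> \<le> (\<Sum>i\<in>(UNIV::'n set). \<Sum>j\<in>(UNIV::'n set). norm x)"
  proof (rule sum_mono)
    fix i
    have "norm (b2m x $ i) \<le> (\<Sum>j\<in>UNIV. \<bar>b2m x $ i $ j\<bar>)" by (rule norm_le_l1_cart)
    also have "\<dots> \<le> (\<Sum>j\<in>(UNIV::'n set). norm x)"
    proof (rule sum_mono)
      fix j
      have "\<bar>b2m x $ i $ j\<bar> \<le> norm (app x (axis j 1))"
        unfolding b2m_nth by (rule component_le_norm_cart)
      also have "\<dots> \<le> norm x" using norm_app[of x "axis j (1::real)"] by simp
      finally show "\<bar>b2m x $ i $ j\<bar> \<le> norm x" .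
    qed
    finally show "norm (b2m x $ i) \<le> (\<Sum>j\<in>(UNIV::'n set). norm x)" .
  qed
  also have "\<dots> = norm x * (real (CARD('n)) * real (CARD('n)))" by simp
  finally show "norm (b2m x) \<le> norm x * (real (CARD('n)) * real (CARD('n)))" .
qed

lemma m2b_mpow: "m2b (mpow A k) = (m2b A) ^ k"
  by (induction k) (simp_all add: m2b_one m2b_mult)

lemma mexp_eq: "mexp A = b2m (exp (m2b A))"
proof -
  have "(\<lambda>k. (1 / fact k) *\<^sub>R (m2b A) ^ k) sums exp (m2b A)"
    using exp_converges[of "m2b A"] by (simp add: divide_inverse_commute)
  from bounded_linear.sums[OF bounded_linear_b2m this]
  have "(\<lambda>k. (1 / fact k) *\<^sub>R mpow A k) sums b2m (exp (m2b A))"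
    by (simp add: b2m_scaleR m2b_mpow[symmetric])
  then show ?thesis unfolding mexp_def by (rule sums_unique[symmetric])
qed

lemma m2b_mexp: "m2b (mexp A) = exp (m2b A)"
  by (simp add: mexp_eq)

lemma mexp_apply: "mexp A *v v = app (exp (m2b A)) v"
  by (metis app_m2b m2b_mexp)




lemma exp_preserves:
  fixes B :: "'a::euclidean_space bop"
  assumes K: "closed K" "0 \<in> K" "\<And>x y. x\<in>K \<Longrightarrow> y\<in>K \<Longrightarrow> x + y \<in> K"
     "\<And>r x. r \<ge> 0 \<Longrightarrow> x\<in>K \<Longrightarrow> r *\<^sub>R x \<in> K"
    and BK: "\<And>x. x\<in>K \<Longrightarrow> app B x \<in> K" and x: "x \<in> K"
  shows "app (exp B) x \<in> K"
proof -
  have pow: "app (B^k) x \<in> K" for k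
    by (induction k) (simp_all add: x app_mult BK)
  have trm: "app (B^k /\<^sub>R fact k) x \<in> K" for k
    using pow[of k] K(4) by (simp add: app_scaleR_left)
  have sumK: "(\<Sum>k\<in>F. app (B^k /\<^sub>R fact k) x) \<in> K" if "finite F" for F
    using that by (induction F rule: finite_induct) (simp_all add: K(2) K(3) trm)
  have "(\<lambda>k. app (B^k /\<^sub>R fact k) x) sums app (exp B) x"
    by (rule sums_app[OF exp_converges])
  then have "(\<lambda>n. \<Sum>k<n. app (B^k /\<^sub>R fact k) x) \<longlonglongrightarrow> app (exp B) x"
    unfolding sums_def .
  then show ?thesis
    by (rule closed_sequentially[OF K(1) sumK[OF finite_lessThan]])
qed

lemma exp_shift:
  fixes B :: "'a::{real_normed_algebra_1,banach}"
  shows "exp (B + c *\<^sub>R 1) = exp c *\<^sub>R exp B"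
proof -
  have "exp (B + c *\<^sub>R 1) = exp B * exp (c *\<^sub>R 1)"
    by (rule exp_add_commuting) simp
  also have "exp (c *\<^sub>R (1::'a)) = exp c *\<^sub>R 1"
    using exp_of_real[of c, where 'a='a] by (simp add: of_real_def)
  finally show ?thesis by simp
qed

lemma norm_exp_minus_one:
  fixes X :: "'a::{real_normed_algebra_1,banach}"
  shows "norm (exp X - 1) \<le> exp (norm X) - 1"
proof -
  have s1: "(\<lambda>n. X^(Suc n) /\<^sub>R fact (Suc n)) sums (exp X - 1)"
    using exp_converges[of X] by (subst sums_Suc_iff) simp
  have s2: "(\<lambda>n. (norm X)^(Suc n) /\<^sub>R fact (Suc n)) sums (exp (norm X) - 1)"
    using exp_converges[of "norm X"] by (subst sums_Suc_iff) simp
  have le: "norm (X^(Suc n) /\<^sub>R fact (Suc n)) \<le> (norm X)^(Suc n) /\<^sub>R fact (Suc n)" for n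
    using norm_power_ineq[of X "Suc n"] by (simp add: divide_right_mono del: power_Suc)
  have sn: "summable (\<lambda>n. norm (X^(Suc n) /\<^sub>R fact (Suc n)))"
    by (rule summable_comparison_test[OF _ sums_summable[OF s2]]) (use le in auto)
  have "norm (exp X - 1) = norm (\<Sum>n. X^(Suc n) /\<^sub>R fact (Suc n))"
    using s1 sums_unique by metis
  also have "\<dots> \<le> (\<Sum>n. norm (X^(Suc n) /\<^sub>R fact (Suc n)))"
    by (rule summable_norm[OF sn])
  also have "\<dots> \<le> (\<Sum>n. (norm X)^(Suc n) /\<^sub>R fact (Suc n))"
    by (rule suminf_le[OF le sn sums_summable[OF s2]])
  also have "\<dots> = exp (norm X) - 1" using s2 sums_unique by metis
  finally show ?thesis .
qed

lemma exp_diff_quot: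
  fixes X :: "'a::{real_normed_algebra_1,banach}"
  shows "(\<lambda>j::nat. (2^j) *\<^sub>R (exp ((1/2^j) *\<^sub>R X) - 1)) \<longlonglongrightarrow> X"
proof -
  have "((\<lambda>t. exp (t *\<^sub>R X)) has_vector_derivative exp (0 *\<^sub>R X) * X) (at 0)"
    by (rule exp_scaleR_has_vector_derivative_right)
  then have "((\<lambda>t. exp (t *\<^sub>R X)) has_derivative (\<lambda>h. h *\<^sub>R X)) (at 0)"
    by (simp add: has_vector_derivative_def)
  then have lim0: "((\<lambda>h. norm (exp (h *\<^sub>R X) - 1 - h *\<^sub>R X) / norm h) \<longlongrightarrow> 0) (at 0)"
    unfolding has_derivative_at by simp
  have hz: "filterlim (\<lambda>j::nat. (1/2^j :: real)) (at 0) sequentially"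
  proof (rule tendsto_imp_filterlim_at_right[THEN filterlim_mono])
    show "(\<lambda>j::nat. (1/2^j :: real)) \<longlonglongrightarrow> 0"
      by (simp add: LIMSEQ_divide_realpow_zero)
    show "\<forall>\<^sub>F j in sequentially. (1/2^j::real) > 0" by simp
    show "at_right (0::real) \<le> at 0" by (simp add: at_eq_sup_left_right)
  qed simp
  have lim1: "(\<lambda>j::nat. norm (exp ((1/2^j) *\<^sub>R X) - 1 - (1/2^j) *\<^sub>R X) / norm (1/2^j::real)) \<longlonglongrightarrow> 0"
    using filterlim_compose[OF lim0 hz] by simp
  have eq: "norm ((2^j) *\<^sub>R (exp ((1/2^j) *\<^sub>R X) - 1) - X) =
      norm (exp ((1/2^j) *\<^sub>R X) - 1 - (1/2^j) *\<^sub>R X) / norm (1/2^j::real)" for j :: nat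
  proof -
    have x: "(2^j::real) *\<^sub>R ((1/2^j) *\<^sub>R X) = X" by simp
    have "(2^j) *\<^sub>R (exp ((1/2^j) *\<^sub>R X) - 1) - X = (2^j::real) *\<^sub>R (exp ((1/2^j) *\<^sub>R X) - 1 - (1/2^j) *\<^sub>R X)"
      by (simp only: scaleR_diff_right x)
    then show ?thesis by (simp add: divide_inverse)
  qed
  have "(\<lambda>j::nat. norm ((2^j) *\<^sub>R (exp ((1/2^j) *\<^sub>R X) - 1) - X)) \<longlonglongrightarrow> 0"
    by (subst eq) (rule lim1)
  then show ?thesis
    by (rule LIM_zero_cancel[OF tendsto_norm_zero_cancel])
qed




definition sqc :: "nat \<Rightarrow> real" where "sqc k = ((1/2::real) gchoose k)"

lemma sqc_rec: "real (Suc k) * sqc (Suc k) = (1/2 - real k) * sqc k"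
  using gbinomial_mult_1[of "1/2::real" k] unfolding sqc_def by (simp add: algebra_simps)

lemma sqc_bound: "k \<ge> 1 \<Longrightarrow> \<bar>sqc k\<bar> \<le> 1/2"
proof (induction k rule: dec_induct)
  case base
  then show ?case by (simp add: sqc_def)
next
  case (step k)
  have "real (Suc k) * \<bar>sqc (Suc k)\<bar> = \<bar>1/2 - real k\<bar> * \<bar>sqc k\<bar>"
    using sqc_rec[of k] by (metis abs_mult abs_of_nat)
  also have "\<dots> \<le> real (Suc k) * (1/2)"
    by (rule mult_mono) (use step in auto)
  finally show ?case by (simp del: of_nat_Suc)
qed

lemma sqc_bound1: "\<bar>sqc k\<bar> \<le> 1"
  using sqc_bound[of k] by (cases k) (auto simp: sqc_def)

lemma sqc_0[simp]: "sqc 0 = 1" by (simp add: sqc_def)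

lemma sqc_conv: "(\<Sum>i\<le>k. sqc i * sqc (k - i)) = (if k \<le> 1 then 1 else 0)"
proof -
  have "(\<Sum>i\<le>k. sqc i * sqc (k - i)) = (1::real) gchoose k"
    using gbinomial_Vandermonde[of "1/2::real" "1/2" k] unfolding sqc_def
    by (simp add: atMost_atLeast0)
  also have "\<dots> = of_nat (1 choose k)" using binomial_gbinomial[of 1 k, where 'a=real] by simp
  also have "\<dots> = (if k \<le> 1 then 1 else 0)"
    by (cases k) (auto simp: binomial_eq_0)
  finally show ?thesis .
qed

definition rsq :: "'a::{real_normed_algebra_1,banach} \<Rightarrow> 'a" where
  "rsq N = (\<Sum>k. sqc k *\<^sub>R N^k)"

lemma rsq_summable_norm:
  fixes N :: "'a::{real_normed_algebra_1,banach}"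
  assumes "norm N < 1"
  shows "summable (\<lambda>k. norm (sqc k *\<^sub>R N^k))"
proof (rule summable_comparison_test[OF _ summable_geometric[of "norm N"]])
  show "\<exists>M. \<forall>n\<ge>M. norm (norm (sqc n *\<^sub>R N ^ n)) \<le> norm N ^ n"
  proof (intro exI allI impI)
    fix n
    have "norm (sqc n *\<^sub>R N ^ n) = \<bar>sqc n\<bar> * norm (N^n)" by simp
    also have "\<dots> \<le> 1 * norm N ^ n"
      by (rule mult_mono) (simp_all add: sqc_bound1 norm_power_ineq)
    finally show "norm (norm (sqc n *\<^sub>R N ^ n)) \<le> norm N ^ n" by simp
  qed
qed (use assms in simp)

lemma rsq_sums:
  fixes N :: "'a::{real_normed_algebra_1,banach}"
  assumes "norm N < 1"
  shows "(\<lambda>k. sqc k *\<^sub>R N^k) sums rsq N"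
  unfolding rsq_def by (rule summable_sums[OF summable_norm_cancel[OF rsq_summable_norm[OF assms]]])

lemma rsq_square:
  fixes N :: "'a::{real_normed_algebra_1,banach}"
  assumes "norm N < 1"
  shows "rsq N * rsq N = 1 + N"
proof -
  have "rsq N * rsq N = (\<Sum>k. \<Sum>i\<le>k. (sqc i *\<^sub>R N^i) * (sqc (k - i) *\<^sub>R N^(k-i)))"
    unfolding rsq_def by (rule Cauchy_product[OF rsq_summable_norm[OF assms] rsq_summable_norm[OF assms]])
  also have "\<dots> = (\<Sum>k. (if k \<le> 1 then 1 else 0) *\<^sub>R N^k)"
  proof -
    have "(\<Sum>i\<le>k. (sqc i *\<^sub>R N^i) * (sqc (k - i) *\<^sub>R N^(k-i))) = (if k \<le> 1 then 1 else 0) *\<^sub>R N^k" for k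
    proof -
      have "(\<Sum>i\<le>k. (sqc i *\<^sub>R N^i) * (sqc (k - i) *\<^sub>R N^(k-i))) = (\<Sum>i\<le>k. (sqc i * sqc (k-i)) *\<^sub>R N^k)"
      proof (rule sum.cong[OF refl])
        fix i assume "i \<in> {..k}"
        then have ik: "i + (k - i) = k" by simp
        have "(sqc i *\<^sub>R N^i) * (sqc (k - i) *\<^sub>R N^(k-i)) = (sqc i * sqc (k-i)) *\<^sub>R (N^i * N^(k-i))"
          by simp
        also have "N^i * N^(k-i) = N^k" using power_add[of N i "k-i", symmetric] ik by simp
        finally show "(sqc i *\<^sub>R N^i) * (sqc (k - i) *\<^sub>R N^(k-i)) = (sqc i * sqc (k-i)) *\<^sub>R N^k" .
      qed
      also have "\<dots> = (\<Sum>i\<le>k. sqc i * sqc (k-i)) *\<^sub>R N^k" by (simp add: scaleR_sum_left)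
      finally show ?thesis by (simp add: sqc_conv)
    qed
    then show ?thesis by simp
  qed
  also have "\<dots> = 1 + N"
  proof -
    have "(\<lambda>k. (if k \<le> 1 then 1 else 0) *\<^sub>R N^k) sums (\<Sum>k\<in>{0,1}. (if k \<le> 1 then 1 else 0) *\<^sub>R N^k)"
      by (rule sums_finite) auto
    then show ?thesis by (simp add: sums_iff)
  qed
  finally show ?thesis .
qed

lemma rsq_near:
  fixes N :: "'a::{real_normed_algebra_1,banach}"
  assumes "norm N \<le> 1/2"
  shows "norm (rsq N - 1) \<le> 1/2"
proof -
  have n1: "norm N < 1" using assms by simp
  have s1: "(\<lambda>k. sqc (Suc k) *\<^sub>R N^(Suc k)) sums (rsq N - 1)"
    using rsq_sums[OF n1] by (subst sums_Suc_iff) simp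
  have s2: "(\<lambda>k. (1/2) * (norm N)^(Suc k)) sums ((1/2) * (norm N / (1 - norm N)))"
  proof -
    have "(\<lambda>k. (norm N)^(Suc k)) sums (norm N * (1 / (1 - norm N)))"
      using sums_mult[OF geometric_sums[of "norm N"], of "norm N"] n1 by simp
    from sums_mult[OF this, of "1/2"] show ?thesis by simp
  qed
  have le: "norm (sqc (Suc k) *\<^sub>R N^(Suc k)) \<le> (1/2) * (norm N)^(Suc k)" for k
  proof -
    have "norm (sqc (Suc k) *\<^sub>R N^(Suc k)) = \<bar>sqc (Suc k)\<bar> * norm (N^(Suc k))" by simp
    also have "\<dots> \<le> (1/2) * (norm N)^(Suc k)"
      by (rule mult_mono) (use sqc_bound[of "Suc k"] norm_power_ineq[of N "Suc k"] in \<open>simp_all del: power_Suc\<close>)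
    finally show ?thesis .
  qed
  have sn: "summable (\<lambda>k. norm (sqc (Suc k) *\<^sub>R N^(Suc k)))"
    by (rule summable_comparison_test[OF _ sums_summable[OF s2]]) (use le in auto)
  have "norm (rsq N - 1) \<le> (\<Sum>k. norm (sqc (Suc k) *\<^sub>R N^(Suc k)))"
    using summable_norm[OF sn] s1 sums_unique by metis
  also have "\<dots> \<le> (\<Sum>k. (1/2) * (norm N)^(Suc k))"
    by (rule suminf_le[OF le sn sums_summable[OF s2]])
  also have "\<dots> = (1/2) * (norm N / (1 - norm N))" using s2 sums_unique by metis
  also have "\<dots> \<le> 1/2"
  proof -
    have "norm N / (1 - norm N) \<le> 1" using assms by (simp add: divide_le_eq)
    then show ?thesis by linarith
  qed
  finally show ?thesis .
qed

lemma rsq_in: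
  fixes N :: "'a::{real_normed_algebra_1,banach}"
  assumes "norm N < 1" "closed S" "0 \<in> S" "1 \<in> S" "N \<in> S"
    "\<And>x y. x \<in> S \<Longrightarrow> y \<in> S \<Longrightarrow> x + y \<in> S"
    "\<And>x y. x \<in> S \<Longrightarrow> y \<in> S \<Longrightarrow> x * y \<in> S"
    "\<And>r x. x \<in> S \<Longrightarrow> r *\<^sub>R x \<in> S"
  shows "rsq N \<in> S"
proof -
  have pw: "N^k \<in> S" for k by (induction k) (simp_all add: assms)
  have ps: "(\<Sum>k<n. sqc k *\<^sub>R N^k) \<in> S" for n
    by (induction n) (simp_all add: assms pw)
  show ?thesis using rsq_sums[OF assms(1)] unfolding sums_def by (rule closed_sequentially[OF assms(2) ps, rotated])
qed

lemma rsq_commute: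
  fixes N :: "'a::{real_normed_algebra_1,banach}"
  assumes "norm N < 1" "Y * N = N * Y"
  shows "Y * rsq N = rsq N * Y"
proof -
  have pc: "Y * N^k = N^k * Y" for k
    by (induction k) (simp_all add: assms(2) mult.assoc[symmetric], simp add: mult.assoc)
  have sm: "summable (\<lambda>k. sqc k *\<^sub>R N^k)" using rsq_sums[OF assms(1)] sums_summable by blast
  have "Y * rsq N = (\<Sum>k. Y * (sqc k *\<^sub>R N^k))" unfolding rsq_def by (rule suminf_mult[OF sm, symmetric])
  also have "\<dots> = (\<Sum>k. (sqc k *\<^sub>R N^k) * Y)" by (simp add: pc)
  also have "\<dots> = rsq N * Y" unfolding rsq_def by (rule suminf_mult2[OF sm, symmetric])
  finally show ?thesis .
qed




lemma bop_unique:
  fixes R Y :: "'a::euclidean_space bop"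
  assumes sq: "R*R = Y*Y" and cm: "R*Y = Y*R" and nr: "norm (R-1) + norm (Y-1) < 2"
  shows "R = Y"
proof (rule bop_eqI)
  fix v
  define w where "w = app (R - Y) v"
  have z: "(R+Y)*(R-Y) = 0"
    using sq cm by (simp add: algebra_simps)
  have "app (R+Y) w = 0"
    unfolding w_def by (metis app_mult app_zero_left z)
  then have eq: "2 *\<^sub>R w = - (app (R - 1) w + app (Y - 1) w)"
    by (simp add: app_add_left app_diff_left algebra_simps scaleR_2)
  have "w = 0"
  proof (rule ccontr)
    assume "w \<noteq> 0"
    then have pos: "norm w > 0" by simp
    have "2 * norm w = norm (app (R - 1) w + app (Y - 1) w)"
      using arg_cong[OF eq, of norm] by (simp only: norm_minus_cancel norm_scaleR)
    also have "\<dots> \<le> norm (R-1) * norm w + norm (Y-1) * norm w"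
      by (rule order_trans[OF norm_triangle_ineq add_mono[OF norm_app norm_app]])
    also have "\<dots> = (norm (R-1) + norm (Y-1)) * norm w" by (simp add: algebra_simps)
    also have "\<dots> < 2 * norm w" using nr pos by simp
    finally show False by simp
  qed
  then show "app R v = app Y v" unfolding w_def by (simp add: app_diff_left)
qed

lemma exp_small_in:
  fixes X :: "'a::euclidean_space bop"
  assumes S: "closed S" "0 \<in> S" "1 \<in> S"
    "\<And>x y. x \<in> S \<Longrightarrow> y \<in> S \<Longrightarrow> x + y \<in> S"
    "\<And>x y. x \<in> S \<Longrightarrow> y \<in> S \<Longrightarrow> x * y \<in> S"
    "\<And>r x. x \<in> S \<Longrightarrow> r *\<^sub>R x \<in> S"
    and nX: "norm X \<le> 1/4" and eX: "exp X \<in> S"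
  shows "X \<in> S"
proof -
  have diffS: "x - y \<in> S" if "x \<in> S" "y \<in> S" for x y
    using S(4)[OF that(1) S(6)[OF that(2), of "-1"]] by simp
  have small: "norm (exp (c *\<^sub>R X) - 1) \<le> 1/2" if "0 \<le> c" "c \<le> 1" for c :: real
  proof -
    have "c * norm X \<le> 1 * norm X" using that by (intro mult_right_mono) simp_all
    then have nc: "norm (c *\<^sub>R X) \<le> 1/4" using nX that by simp
    have "exp (norm (c *\<^sub>R X)) \<le> 1 + 2 * norm (c *\<^sub>R X)"
      using exp_bound_lemma[of "norm (c *\<^sub>R X)"] nc by simp
    then show ?thesis using norm_exp_minus_one[of "c *\<^sub>R X"] nc by linarith
  qed
  have step: "exp ((1/2^j) *\<^sub>R X) \<in> S" for j :: nat
  proof (induction j)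
    case 0
    then show ?case using eX by simp
  next
    case (Suc j)
    define a where "a = (1/2^(Suc j)) *\<^sub>R X"
    define Y where "Y = exp a"
    define E where "E = exp ((1/2^j) *\<^sub>R X)"
    have "(1/2^j) *\<^sub>R X = a + a" unfolding a_def by (simp add: scaleR_add_left[symmetric])
    then have EY: "E = Y * Y" unfolding E_def Y_def by (simp add: exp_add_commuting)
    define N where "N = E - 1"
    have NS: "N \<in> S" unfolding N_def E_def using Suc.IH S(3) diffS by blast
    have nN: "norm N \<le> 1/2" unfolding N_def E_def by (rule small) simp_all
    then have nN1: "norm N < 1" by simp
    define R where "R = rsq N"
    have RS: "R \<in> S" unfolding R_def by (rule rsq_in[OF nN1 S(1,2,3) NS S(4,5,6)])
    have RR: "R * R = Y * Y" unfolding R_def using rsq_square[OF nN1] EY N_def by simp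
    have YN: "Y * N = N * Y" unfolding N_def EY by (simp add: algebra_simps)
    have RY: "R * Y = Y * R" unfolding R_def using rsq_commute[OF nN1 YN] by simp
    have nR: "norm (R - 1) \<le> 1/2" unfolding R_def by (rule rsq_near[OF nN])
    have nY: "norm (Y - 1) \<le> 1/2" unfolding Y_def a_def
      using one_le_power[of "2::real" "Suc j"] by (intro small) auto
    have "R = Y" by (rule bop_unique[OF RR RY]) (use nR nY in linarith)
    then show ?case using RS Y_def a_def by simp
  qed
  have seqS: "(2^j) *\<^sub>R (exp ((1/2^j) *\<^sub>R X) - 1) \<in> S" for j :: nat
    using S(6)[OF diffS[OF step S(3)]] .
  show ?thesis
    by (rule closed_sequentially[OF S(1) seqS exp_diff_quot])
qed

definition invs :: "'a::euclidean_space set \<Rightarrow> 'a bop set" where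
  "invs G = {L. \<forall>v\<in>G. app L v \<in> G}"

lemma invs_props:
  fixes G :: "'a::euclidean_space set"
  assumes G: "subspace G"
  shows "closed (invs G)" "0 \<in> invs G" "1 \<in> invs G"
    "\<And>x y. x \<in> invs G \<Longrightarrow> y \<in> invs G \<Longrightarrow> x + y \<in> invs G"
    "\<And>x y. x \<in> invs G \<Longrightarrow> y \<in> invs G \<Longrightarrow> x * y \<in> invs G"
    "\<And>r x. x \<in> invs G \<Longrightarrow> r *\<^sub>R x \<in> invs G"
proof -
  have cG: "closed G" by (rule closed_subspace[OF G])
  show "closed (invs G)"
    unfolding closed_sequential_limits
  proof (intro allI impI)
    fix x l assume h: "(\<forall>n. x n \<in> invs G) \<and> x \<longlonglongrightarrow> l"
    show "l \<in> invs G" unfolding invs_def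
    proof
      show "\<forall>v\<in>G. app l v \<in> G"
      proof
        fix v assume v: "v \<in> G"
        have "\<And>n. app (x n) v \<in> G" using h v unfolding invs_def by blast
        then show "app l v \<in> G" by (rule closed_sequentially[OF cG _ tendsto_app_left[OF conjunct2[OF h]]])
      qed
    qed
  qed
  show "0 \<in> invs G" using G by (simp add: invs_def subspace_0)
  show "1 \<in> invs G" by (simp add: invs_def)
  show "x + y \<in> invs G" if "x \<in> invs G" "y \<in> invs G" for x y
    using that G by (simp add: invs_def app_add_left subspace_add)
  show "x * y \<in> invs G" if "x \<in> invs G" "y \<in> invs G" for x y
    using that by (simp add: invs_def app_mult)
  show "r *\<^sub>R x \<in> invs G" if "x \<in> invs G" for r x
    using that G by (simp add: invs_def app_scaleR_left subspace_scale)
qed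

lemma exp_small_inv:
  fixes X :: "'a::euclidean_space bop"
  assumes "subspace G" "norm X \<le> 1/4" "\<And>v. v \<in> G \<Longrightarrow> app (exp X) v \<in> G" "v \<in> G"
  shows "app X v \<in> G"
proof -
  have "X \<in> invs G"
    by (rule exp_small_in[OF invs_props[OF assms(1)] assms(2)]) (use assms(3) in \<open>auto simp add: invs_def\<close>)
  then show ?thesis using assms(4) by (simp add: invs_def)
qed




lemma power_has_integral:
  fixes s :: real assumes "0 \<le> s"
  shows "((\<lambda>r. r^k) has_integral (s^(Suc k) / real (Suc k))) {0..s}"
proof -
  have "((\<lambda>r. r^k) has_integral (s^(Suc k) / real (Suc k) - 0^(Suc k) / real (Suc k))) {0..s}"
  proof (rule fundamental_theorem_of_calculus[OF assms])
    fix x :: real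
    have "((\<lambda>r. r^Suc k / real (Suc k)) has_field_derivative (real (Suc k) * x^k / real (Suc k))) (at x within {0..s})"
      by (intro derivative_eq_intros) auto
    then show "((\<lambda>r. r^Suc k / real (Suc k)) has_vector_derivative x^k) (at x within {0..s})"
      by (simp add: has_real_derivative_iff_has_vector_derivative del: power_Suc of_nat_Suc)
  qed
  then show ?thesis by simp
qed

lemma gronwall0:
  fixes m :: "real \<Rightarrow> real"
  assumes cont: "continuous_on {0..t} m" and nn: "\<And>s. s \<in> {0..t} \<Longrightarrow> 0 \<le> m s"
    and le: "\<And>s. s \<in> {0..t} \<Longrightarrow> m s \<le> L * integral {0..s} m" and L: "0 \<le> L"
    and s: "s \<in> {0..t}"
  shows "m s = 0"
proof -
  have ne: "{0..t} \<noteq> {}" using s by auto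
  obtain s0 where "s0 \<in> {0..t}" and B: "\<And>r. r \<in> {0..t} \<Longrightarrow> m r \<le> m s0"
    using continuous_attains_sup[OF compact_Icc ne cont] by blast
  define B where "B = m s0"
  have B0: "0 \<le> B" unfolding B_def using nn \<open>s0 \<in> {0..t}\<close> .
  have ind: "\<forall>r\<in>{0..t}. m r \<le> B * (L * r)^k / fact k" for k
  proof (induction k)
    case 0
    then show ?case using B unfolding B_def by simp
  next
    case (Suc k)
    show ?case
    proof
      fix r assume r: "r \<in> {0..t}"
      have sub: "{0..r} \<subseteq> {0..t}" using r by auto
      have intm: "m integrable_on {0..r}"
        by (rule integrable_continuous_interval[OF continuous_on_subset[OF cont sub]])
      have hp: "((\<lambda>u. B * L^k / fact k * u^k) has_integral (B * L^k / fact k * (r^(Suc k) / real (Suc k)))) {0..r}"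
        by (rule has_integral_mult_right[OF power_has_integral]) (use r in simp)
      have "integral {0..r} m \<le> integral {0..r} (\<lambda>u. B * L^k / fact k * u^k)"
      proof (rule integral_le[OF intm has_integral_integrable[OF hp]])
        fix u assume "u \<in> {0..r}"
        then have "u \<in> {0..t}" using sub by auto
        then have "m u \<le> B * (L*u)^k / fact k" using Suc.IH by blast
        then show "m u \<le> B * L^k / fact k * u^k" by (simp add: power_mult_distrib)
      qed
      also have "\<dots> = B * L^k / fact k * (r^(Suc k) / real (Suc k))"
        using hp integral_unique by blast
      finally have "L * integral {0..r} m \<le> L * (B * L^k / fact k * (r^(Suc k) / real (Suc k)))"
        using L by (rule mult_left_mono)
      also have "\<dots> = B * (L * r)^(Suc k) / fact (Suc k)"
        by (simp add: power_mult_distrib field_simps)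
      finally show "m r \<le> B * (L * r)^(Suc k) / fact (Suc k)"
        using le[OF r] by linarith
    qed
  qed
  have "(\<lambda>k. (L * s)^k / fact k) \<longlonglongrightarrow> 0"
    using summable_LIMSEQ_zero[OF summable_exp[of "L * s"]] by (simp add: divide_inverse mult.commute)
  then have lim: "(\<lambda>k. B * ((L * s)^k / fact k)) \<longlonglongrightarrow> 0"
    using tendsto_mult_right_zero by blast
  have "m s \<le> 0"
  proof (rule tendsto_lowerbound[OF lim])
    show "\<forall>\<^sub>F k in sequentially. m s \<le> B * ((L * s)^k / fact k)"
      using ind s by (simp add: always_eventually)
  qed simp
  then show ?thesis using nn[OF s] by simp
qed

lemma linear_mvec_left: "linear (\<lambda>M::real^'n::finite^'m::finite. M *v x)"
  by (rule linearI) (simp_all add: matrix_vector_mult_add_rdistrib scaleR_matrix_vector_assoc)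

lemma norm_mvec: "norm ((A::real^'n::finite^'n) *v v) \<le> norm (m2b A) * norm v"
  using norm_app[of "m2b A" v] by simp

lemma flow_inv:
  fixes \<sigma> \<Phi> :: "real \<Rightarrow> real^'n::finite^'n" and G :: "(real^'n) set"
  assumes G: "subspace G"
    and sinv: "\<And>s v. s \<in> {0..t} \<Longrightarrow> v \<in> G \<Longrightarrow> \<sigma> s *v v \<in> G"
    and bnd: "\<And>s. s \<in> {0..t} \<Longrightarrow> norm (m2b (\<sigma> s)) \<le> L"
    and cont: "continuous_on {0..t} \<Phi>"
    and int: "\<And>s. s \<in> {0..t} \<Longrightarrow> ((\<lambda>r. \<sigma> r ** \<Phi> r) has_integral (\<Phi> s - mat 1)) {0..s}"
    and x: "x \<in> G" and s: "s \<in> {0..t}"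
  shows "\<Phi> s *v x \<in> G"
proof -
  obtain T where T: "T \<subseteq> G" "pairwise orthogonal T" "span T = G"
    using orthogonal_basis_subspace[OF G] by metis
  define q where "q v = v - (\<Sum>b\<in>T. (b \<bullet> v / (b \<bullet> b)) *\<^sub>R b)" for v :: "real^'n"
  have pG: "(\<Sum>b\<in>T. (b \<bullet> v / (b \<bullet> b)) *\<^sub>R b) \<in> G" for v
    using G T(1) by (intro subspace_sum subspace_scale) auto
  have qorth: "orthogonal w (q v)" if "w \<in> G" for w v
    unfolding q_def by (rule Gram_Schmidt_step[OF T(2)]) (use that T(3) in simp)
  have q0: "q v = 0 \<longleftrightarrow> v \<in> G" for v
  proof
    assume "q v = 0" then show "v \<in> G" using pG[of v] unfolding q_def by simp
  next
    assume v: "v \<in> G"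
    then have "q v \<in> G" unfolding q_def using pG G by (simp add: subspace_diff)
    then have "orthogonal (q v) (q v)" by (rule qorth)
    then show "q v = 0" by (simp add: orthogonal_def)
  qed
  have qlin: "linear q"
  proof (rule linearI)
    show "q (v + w) = q v + q w" for v w
      unfolding q_def by (simp add: inner_add_right add_divide_distrib scaleR_add_left sum.distrib algebra_simps)
    show "q (c *\<^sub>R v) = c *\<^sub>R q v" for c v
      unfolding q_def by (simp add: scaleR_sum_right scaleR_diff_right)
  qed
  have qbl: "bounded_linear q" using qlin linear_conv_bounded_linear by blast
  obtain Cq where Cq: "\<And>v. norm (q v) \<le> norm v * Cq" "Cq > 0"
    using bounded_linear.pos_bounded[OF qbl] by blast
  have pw: "w - q w \<in> G" for w using pG[of w] unfolding q_def by simp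
  have qsig: "q (\<sigma> r *v w) = q (\<sigma> r *v q w)" if r: "r \<in> {0..t}" for r w
  proof -
    have "\<sigma> r *v w = \<sigma> r *v q w + \<sigma> r *v (w - q w)"
      by (simp add: matrix_vector_right_distrib[symmetric])
    moreover have "q (\<sigma> r *v (w - q w)) = 0" using sinv[OF r pw] q0 by blast
    ultimately show ?thesis using linear_add[OF qlin] by simp
  qed
  define y where "y r = q (\<Phi> r *v x)" for r
  define h where "h M = q (M *v x)" for M :: "real^'n^'n"
  have hlin: "linear h" unfolding h_def
    using linear_compose[OF linear_mvec_left qlin] by (simp add: o_def)
  have hbl: "bounded_linear h" using hlin linear_conv_bounded_linear by blast
  have qx: "q x = 0" using q0 x by blast
  have L0: "0 \<le> L" using bnd[OF s] norm_ge_zero order_trans by blast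
  have ycont: "continuous_on {0..t} y"
    unfolding y_def using bounded_linear.continuous_on[OF hbl cont] by (simp add: h_def)
  have mcont: "continuous_on {0..t} (\<lambda>u. norm (y u))"
    by (intro continuous_on_norm ycont)
  have key: "norm (y r) \<le> (Cq * L) * integral {0..r} (\<lambda>u. norm (y u))" if r: "r \<in> {0..t}" for r
  proof -
    have sub: "{0..r} \<subseteq> {0..t}" using r by auto
    have hi: "((\<lambda>u. h (\<sigma> u ** \<Phi> u)) has_integral y r) {0..r}"
    proof -
      have "((h \<circ> (\<lambda>u. \<sigma> u ** \<Phi> u)) has_integral h (\<Phi> r - mat 1)) {0..r}"
        by (rule has_integral_linear[OF int[OF r] hbl])
      moreover have "h (\<Phi> r - mat 1) = y r"
        unfolding h_def y_def using linear_diff[OF qlin] qx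
        by (simp add: matrix_vector_mult_diff_rdistrib)
      ultimately show ?thesis by (simp add: o_def)
    qed
    have gi: "(\<lambda>u. Cq * L * norm (y u)) integrable_on {0..r}"
      by (intro integrable_continuous_interval continuous_intros continuous_on_subset[OF ycont sub])
    have "norm (y r) = norm (integral {0..r} (\<lambda>u. h (\<sigma> u ** \<Phi> u)))"
      using hi integral_unique by metis
    also have "\<dots> \<le> integral {0..r} (\<lambda>u. Cq * L * norm (y u))"
    proof (rule integral_norm_bound_integral[OF has_integral_integrable[OF hi] gi])
      fix u assume u: "u \<in> {0..r}"
      then have ut: "u \<in> {0..t}" using sub by auto
      have "h (\<sigma> u ** \<Phi> u) = q (\<sigma> u *v y u)"
        unfolding h_def y_def using qsig[OF ut] by (simp add: matrix_vector_mul_assoc[symmetric])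
      then have "norm (h (\<sigma> u ** \<Phi> u)) \<le> norm (\<sigma> u *v y u) * Cq" using Cq(1) by simp
      also have "\<dots> \<le> (norm (m2b (\<sigma> u)) * norm (y u)) * Cq"
        by (rule mult_right_mono[OF norm_mvec]) (use Cq in simp)
      also have "\<dots> \<le> (L * norm (y u)) * Cq"
        by (intro mult_right_mono bnd[OF ut]) (use Cq in simp_all)
      finally show "norm (h (\<sigma> u ** \<Phi> u)) \<le> Cq * L * norm (y u)" by (simp add: ac_simps)
    qed
    also have "\<dots> = (Cq * L) * integral {0..r} (\<lambda>u. norm (y u))"
      using integral_cmul[of "{0..r}" "Cq * L" "\<lambda>u. norm (y u)"] by simp
    finally show ?thesis .
  qed
  have "norm (y s) = 0"
    by (rule gronwall0[OF mcont _ key _ s]) (use Cq L0 in simp_all)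
  then show ?thesis using q0 unfolding y_def by simp
qed




lemma mexp_deriv:
  fixes C :: "real^'n::finite^'n"
  shows "((\<lambda>s. mexp (s *\<^sub>R C)) has_vector_derivative (C ** mexp (s *\<^sub>R C))) (at s within T)"
proof -
  have "((\<lambda>s. exp (s *\<^sub>R m2b C)) has_vector_derivative m2b C * exp (s *\<^sub>R m2b C)) (at s within T)"
    by (rule has_vector_derivative_at_within[OF exp_scaleR_has_vector_derivative_left])
  then have "((\<lambda>s. exp (s *\<^sub>R m2b C)) has_derivative (\<lambda>h. h *\<^sub>R (m2b C * exp (s *\<^sub>R m2b C)))) (at s within T)"
    by (simp add: has_vector_derivative_def)
  from bounded_linear.has_derivative[OF bounded_linear_b2m this]
  have "((\<lambda>s. b2m (exp (s *\<^sub>R m2b C))) has_derivative (\<lambda>h. h *\<^sub>R b2m (m2b C * exp (s *\<^sub>R m2b C)))) (at s within T)"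
    by (simp add: b2m_scaleR)
  then show ?thesis
    by (simp add: has_vector_derivative_def mexp_eq m2b_scaleR b2m_mult)
qed

lemma mexp_zero: "mexp (0::real^'n::finite^'n) = mat 1"
proof -
  have "m2b (0::real^'n^'n) = 0" using linear_0[OF linear_m2b] .
  then have "mexp (0::real^'n^'n) = b2m 1" by (simp add: mexp_eq)
  then show ?thesis by (metis b2m_m2b m2b_one)
qed

lemma mexp_in_csg:
  fixes C :: "real^'n::finite^'n"
  assumes "C \<in> M"
  shows "mexp (t *\<^sub>R C) \<in> csg_step M t"
proof -
  have meas: "(\<lambda>s. C) measurable_on {0..t}" by simp
  have cont: "continuous_on {0..t} (\<lambda>s. mexp (s *\<^sub>R C))"
    by (rule continuous_on_vector_derivative[OF mexp_deriv[where C=C]])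
  have int: "((\<lambda>r. C ** mexp (r *\<^sub>R C)) has_integral (mexp (s *\<^sub>R C) - mat 1)) {0..s}" if "s \<in> {0..t}" for s
  proof -
    have "((\<lambda>r. C ** mexp (r *\<^sub>R C)) has_integral (mexp (s *\<^sub>R C) - mexp (0 *\<^sub>R C))) {0..s}"
      by (rule fundamental_theorem_of_calculus) (use that mexp_deriv in auto)
    then show ?thesis by (simp add: mexp_zero)
  qed
  show ?thesis unfolding csg_step_def
    by (intro CollectI exI[where x="\<lambda>s. C"] exI[where x="\<lambda>s. mexp (s *\<^sub>R C)"] conjI refl)
       (use meas cont int assms in auto)
qed




lemma relint_decomp:
  fixes S :: "'a::euclidean_space set"
  assumes "S \<noteq> {}"
  shows "\<exists>A0\<in>convex hull S. \<forall>B\<in>S. \<exists>l C. 0 < l \<and> l \<le> 1 \<and> C \<in> convex hull S \<and> A0 = l *\<^sub>R B + (1 - l) *\<^sub>R C"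
proof -
  define T where "T = convex hull S"
  have cT: "convex T" unfolding T_def by simp
  have "T \<noteq> {}" using assms unfolding T_def by simp
  then obtain A0 where A0: "A0 \<in> rel_interior T" using rel_interior_eq_empty[OF cT] by blast
  then obtain e where e: "e > 0" "cball A0 e \<inter> affine hull T \<subseteq> T" and A0T: "A0 \<in> T"
    using mem_rel_interior_cball by blast
  have "\<exists>l C. 0 < l \<and> l \<le> 1 \<and> C \<in> T \<and> A0 = l *\<^sub>R B + (1 - l) *\<^sub>R C" if B: "B \<in> S" for B
  proof (cases "B = A0")
    case True
    then show ?thesis using A0T by (intro exI[where x=1] exI[where x=A0]) simp
  next
    case False
    have BT: "B \<in> T" using B unfolding T_def by (simp add: hull_inc)
    define d where "d = norm (A0 - B)"
    have d: "d > 0" using False unfolding d_def by simp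
    define \<epsilon> where "\<epsilon> = e / d"
    have ep: "\<epsilon> > 0" unfolding \<epsilon>_def using e d by simp
    define C where "C = A0 + \<epsilon> *\<^sub>R (A0 - B)"
    have "C = (1 + \<epsilon>) *\<^sub>R A0 + (- \<epsilon>) *\<^sub>R B" unfolding C_def by (simp add: algebra_simps)
    moreover have "A0 \<in> affine hull T" "B \<in> affine hull T" using A0T BT by (auto simp: hull_inc)
    moreover have "(1 + \<epsilon>) *\<^sub>R A0 + (- \<epsilon>) *\<^sub>R B \<in> affine hull T"
      by (rule mem_affine[OF affine_affine_hull \<open>A0 \<in> affine hull T\<close> \<open>B \<in> affine hull T\<close>]) simp
    ultimately have Caff: "C \<in> affine hull T" by simp
    have "dist A0 C = \<epsilon> * d" unfolding C_def d_def dist_norm using ep by simp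
    also have "\<dots> = e" unfolding \<epsilon>_def using d by simp
    finally have "C \<in> cball A0 e" by simp
    with Caff e have CT: "C \<in> T" by blast
    define l where "l = \<epsilon> / (1 + \<epsilon>)"
    have l: "0 < l" "l \<le> 1" unfolding l_def using ep by auto
    have "l *\<^sub>R B + (1 - l) *\<^sub>R C = A0"
    proof -
      have "1 - l = 1 / (1 + \<epsilon>)" unfolding l_def using ep by (simp add: field_simps)
      then have "l *\<^sub>R B + (1 - l) *\<^sub>R C = (1 / (1 + \<epsilon>)) *\<^sub>R (\<epsilon> *\<^sub>R B + C)"
        unfolding l_def by (simp add: scaleR_add_right divide_inverse)
      also have "\<epsilon> *\<^sub>R B + C = (1 + \<epsilon>) *\<^sub>R A0" unfolding C_def by (simp add: algebra_simps)
      finally show ?thesis using ep by simp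
    qed
    then show ?thesis using l CT by metis
  qed
  then show ?thesis using A0T unfolding T_def by blast
qed

lemma pc_basic:
  fixes K :: "(real^'n::finite) set"
  assumes "proper_cone K"
  shows "closed K" "0 \<in> K" "\<And>x y. x \<in> K \<Longrightarrow> y \<in> K \<Longrightarrow> x + y \<in> K"
    "\<And>r x. r \<ge> 0 \<Longrightarrow> x \<in> K \<Longrightarrow> r *\<^sub>R x \<in> K"
proof -
  have ne: "K \<noteq> {}" and sc: "\<And>r x. r > 0 \<Longrightarrow> x \<in> K \<Longrightarrow> r *\<^sub>R x \<in> K"
    and cv: "convex K" and cl: "closed K"
    using assms unfolding proper_cone_def by auto
  show "closed K" by (rule cl)
  obtain x where x: "x \<in> K" using ne by blast
  have "(\<lambda>n. (1 / real (Suc n)) *\<^sub>R x) \<longlonglongrightarrow> 0 *\<^sub>R x"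
    by (intro tendsto_intros LIMSEQ_Suc[OF lim_const_over_n])
  then have "(\<lambda>n. (1 / real (Suc n)) *\<^sub>R x) \<longlonglongrightarrow> 0" by simp
  then show z: "0 \<in> K"
    by (rule closed_sequentially[OF cl, rotated]) (use sc x in simp)
  show "x + y \<in> K" if "x \<in> K" "y \<in> K" for x y
  proof -
    have "(1/2) *\<^sub>R x + (1/2) *\<^sub>R y \<in> K" using cv that by (simp add: convex_def)
    then have "2 *\<^sub>R ((1/2) *\<^sub>R x + (1/2) *\<^sub>R y) \<in> K" by (rule sc[rotated]) simp
    then show ?thesis by (simp add: scaleR_add_right)
  qed
  show "r *\<^sub>R x \<in> K" if "r \<ge> 0" "x \<in> K" for r x
    using that z sc by (cases "r = 0") auto
qed

lemma face_basic:
  fixes K F :: "(real^'n::finite) set"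
  assumes K: "proper_cone K" and F: "cone_face K F"
  shows "F \<subseteq> K" "0 \<in> F" "\<And>x y. x \<in> F \<Longrightarrow> y \<in> F \<Longrightarrow> x + y \<in> F"
    "\<And>r x. r \<ge> 0 \<Longrightarrow> x \<in> F \<Longrightarrow> r *\<^sub>R x \<in> F"
    "\<And>x y. x \<in> F \<Longrightarrow> x - y \<in> K \<Longrightarrow> y \<in> K \<Longrightarrow> y \<in> F"
proof -
  have ne: "F \<noteq> {}" and sub: "F \<subseteq> K" and sc: "\<And>r x. r > 0 \<Longrightarrow> x \<in> F \<Longrightarrow> r *\<^sub>R x \<in> F"
    and cv: "convex F" and her: "\<And>x y. x \<in> F \<Longrightarrow> cone_ge K x y \<Longrightarrow> cone_ge K y 0 \<Longrightarrow> y \<in> F"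
    using F unfolding cone_face_def by blast+
  show "F \<subseteq> K" by (rule sub)
  show her2: "y \<in> F" if "x \<in> F" "x - y \<in> K" "y \<in> K" for x y
    using her[OF that(1)] that unfolding cone_ge_def by simp
  obtain x where x: "x \<in> F" using ne by blast
  show z: "0 \<in> F" using her2[OF x] x sub pc_basic(2)[OF K] by auto
  show "x + y \<in> F" if "x \<in> F" "y \<in> F" for x y
  proof -
    have "(1/2) *\<^sub>R x + (1/2) *\<^sub>R y \<in> F" using cv that by (simp add: convex_def)
    then have "2 *\<^sub>R ((1/2) *\<^sub>R x + (1/2) *\<^sub>R y) \<in> F" by (rule sc[rotated]) simp
    then show ?thesis by (simp add: scaleR_add_right)
  qed
  show "r *\<^sub>R x \<in> F" if "r \<ge> 0" "x \<in> F" for r x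
    using that z sc by (cases "r = 0") auto
qed

lemma span_face:
  fixes K F :: "(real^'n::finite) set"
  assumes K: "proper_cone K" and F: "cone_face K F" and x: "x \<in> K" "x \<in> span F"
  shows "x \<in> F"
proof -
  note fb = face_basic[OF K F]
  define D where "D = {a - b | a b. a \<in> F \<and> b \<in> F}"
  have sD: "subspace D" unfolding subspace_def
  proof (intro conjI ballI allI)
    show "0 \<in> D" unfolding D_def using fb(2) by force
    fix u v assume "u \<in> D" "v \<in> D"
    then obtain a b c d where "a \<in> F" "b \<in> F" "c \<in> F" "d \<in> F" "u = a - b" "v = c - d"
      unfolding D_def by blast
    then show "u + v \<in> D" unfolding D_def
      by (intro CollectI exI[where x="a + c"] exI[where x="b + d"]) (auto simp: fb(3))
  next
    fix r u assume "u \<in> D"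
    then obtain a b where ab: "a \<in> F" "b \<in> F" "u = a - b" unfolding D_def by blast
    show "r *\<^sub>R u \<in> D"
    proof (cases "r \<ge> 0")
      case True
      then show ?thesis unfolding D_def using ab fb(4)
        by (intro CollectI exI[where x="r *\<^sub>R a"] exI[where x="r *\<^sub>R b"]) (auto simp: scaleR_diff_right)
    next
      case False
      then show ?thesis unfolding D_def using ab fb(4)[of "-r"]
        by (intro CollectI exI[where x="(-r) *\<^sub>R b"] exI[where x="(-r) *\<^sub>R a"]) (auto simp: scaleR_diff_right)
    qed
  qed
  have "F \<subseteq> D" unfolding D_def using fb(2) by force
  then have "span F \<subseteq> D" using sD by (rule span_minimal)
  with x(2) obtain a b where ab: "a \<in> F" "b \<in> F" "x = a - b" unfolding D_def by blast
  have "a - x \<in> K" using ab fb(1) by auto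
  then show ?thesis by (rule fb(5)[OF ab(1) _ x(1)])
qed

lemma face_heredity:
  fixes K F :: "(real^'n::finite) set"
  assumes K: "proper_cone K" and F: "cone_face K F"
    and B: "B \<in> pi_cone K" and C: "C \<in> pi_cone K" and l: "l > 0" "\<mu> \<ge> 0"
    and inv: "\<And>x. x \<in> F \<Longrightarrow> (l *\<^sub>R B + \<mu> *\<^sub>R C) *v x \<in> F"
    and x: "x \<in> F"
  shows "B *v x \<in> F"
proof -
  note fb = face_basic[OF K F] and kb = pc_basic[OF K]
  have xK: "x \<in> K" using x fb(1) by blast
  have BK: "B *v x \<in> K" and CK: "C *v x \<in> K" using B C xK unfolding pi_cone_def by blast+
  have eq: "(l *\<^sub>R B + \<mu> *\<^sub>R C) *v x = l *\<^sub>R (B *v x) + \<mu> *\<^sub>R (C *v x)"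
    by (simp add: matrix_vector_mult_add_rdistrib scaleR_matrix_vector_assoc)
  have lB: "l *\<^sub>R (B *v x) \<in> F"
  proof (rule fb(5)[OF inv[OF x]])
    show "(l *\<^sub>R B + \<mu> *\<^sub>R C) *v x - l *\<^sub>R (B *v x) \<in> K" unfolding eq using kb(4)[OF l(2) CK] by simp
    show "l *\<^sub>R (B *v x) \<in> K" using kb(4) l BK by simp
  qed
  have "(1/l) *\<^sub>R (l *\<^sub>R (B *v x)) \<in> F" by (rule fb(4)[OF _ lB]) (use l in simp)
  then show ?thesis using l by simp
qed

lemma pi_cone_convex: "convex (pi_cone K)" if "proper_cone K"
proof (rule convexI)
  note kb = pc_basic[OF that]
  fix A B :: "real^'a^'a" and u v :: real
  assume h: "A \<in> pi_cone K" "B \<in> pi_cone K" "0 \<le> u" "0 \<le> v" "u + v = 1"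
  show "u *\<^sub>R A + v *\<^sub>R B \<in> pi_cone K" unfolding pi_cone_def
  proof (rule CollectI, rule ballI)
    fix x assume x: "x \<in> K"
    have "(u *\<^sub>R A + v *\<^sub>R B) *v x = u *\<^sub>R (A *v x) + v *\<^sub>R (B *v x)"
      by (simp add: matrix_vector_mult_add_rdistrib scaleR_matrix_vector_assoc)
    moreover have "A *v x \<in> K" "B *v x \<in> K" using h(1,2) x unfolding pi_cone_def by auto
    then have "u *\<^sub>R (A *v x) \<in> K" "v *\<^sub>R (B *v x) \<in> K" using h(3,4) kb(4) by auto
    ultimately show "(u *\<^sub>R A + v *\<^sub>R B) *v x \<in> K" using kb(3) by simp
  qed
qed

lemma pres_convex:
  fixes F :: "(real^'n::finite) set"
  assumes "convex F"
  shows "convex {A::real^'n^'n. (\<lambda>x. A *v x) ` F \<subseteq> F}"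
proof (rule convexI)
  fix A B :: "real^'n^'n" and u v :: real
  assume h: "A \<in> {A::real^'n^'n. (\<lambda>x. A *v x) ` F \<subseteq> F}" "B \<in> {A::real^'n^'n. (\<lambda>x. A *v x) ` F \<subseteq> F}"
    "0 \<le> u" "0 \<le> v" "u + v = 1"
  show "u *\<^sub>R A + v *\<^sub>R B \<in> {A::real^'n^'n. (\<lambda>x. A *v x) ` F \<subseteq> F}"
  proof (rule CollectI, rule image_subsetI)
    fix x assume x: "x \<in> F"
    have "(u *\<^sub>R A + v *\<^sub>R B) *v x = u *\<^sub>R (A *v x) + v *\<^sub>R (B *v x)"
      by (simp add: matrix_vector_mult_add_rdistrib scaleR_matrix_vector_assoc)
    moreover have "A *v x \<in> F" "B *v x \<in> F" using h(1,2) x by auto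
    ultimately show "(u *\<^sub>R A + v *\<^sub>R B) *v x \<in> F" using assms h(3-5) by (simp add: convex_def)
  qed
qed

lemma pres_span_iff:
  fixes K F :: "(real^'n::finite) set"
  assumes K: "proper_cone K" and F: "cone_face K F" and A: "A \<in> pi_cone K"
  shows "(\<lambda>x. A *v x) ` span F \<subseteq> span F \<longleftrightarrow> (\<lambda>x. A *v x) ` F \<subseteq> F"
proof
  assume h: "(\<lambda>x. A *v x) ` span F \<subseteq> span F"
  show "(\<lambda>x. A *v x) ` F \<subseteq> F"
  proof clarify
    fix x assume x: "x \<in> F"
    have "x \<in> K" using x face_basic(1)[OF K F] by blast
    then have "A *v x \<in> K" using A unfolding pi_cone_def by blast
    moreover have "A *v x \<in> span F" using h x span_base by blast
    ultimately show "A *v x \<in> F" by (rule span_face[OF K F])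
  qed
next
  assume h: "(\<lambda>x. A *v x) ` F \<subseteq> F"
  have "(\<lambda>x. A *v x) ` span F = span ((\<lambda>x. A *v x) ` F)"
    by (rule span_linear_image[symmetric]) simp
  also have "\<dots> \<subseteq> span F" using h by (rule span_mono)
  finally show "(\<lambda>x. A *v x) ` span F \<subseteq> span F" .
qed




lemma dsg_step_1: "dsg_step M (Suc 0) = M"
  by auto

lemma hull_pres:
  fixes F :: "(real^'n::finite) set"
  assumes "convex F" "\<And>X. X \<in> S \<Longrightarrow> (\<lambda>x. X *v x) ` F \<subseteq> F" "A \<in> convex hull S"
  shows "(\<lambda>x. A *v x) ` F \<subseteq> F"
proof -
  have "convex hull S \<subseteq> {A::real^'n^'n. (\<lambda>x. A *v x) ` F \<subseteq> F}"
    by (rule hull_minimal) (use assms(2) pres_convex[OF assms(1)] in auto)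
  then show ?thesis using assms(3) by blast
qed

lemma hull_pi:
  assumes "proper_cone K" "S \<subseteq> pi_cone K"
  shows "convex hull S \<subseteq> pi_cone K"
  by (rule hull_minimal[where S=convex, OF assms(2) pi_cone_convex[OF assms(1)]])

lemma face_convex: "cone_face K F \<Longrightarrow> convex F"
  unfolding cone_face_def by blast

lemma relint_face:
  fixes K :: "(real^'n::finite) set"
  assumes K: "proper_cone K" and S: "S \<subseteq> pi_cone K" and F: "cone_face K F"
    and A0: "\<forall>B\<in>S. \<exists>l C. 0 < l \<and> l \<le> 1 \<and> C \<in> convex hull S \<and> A0 = l *\<^sub>R B + (1 - l) *\<^sub>R C"
    and P: "(\<lambda>x. A0 *v x) ` F \<subseteq> F" and B: "B \<in> S"
  shows "(\<lambda>x. B *v x) ` F \<subseteq> F"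
proof -
  obtain l C where lC: "0 < l" "l \<le> 1" "C \<in> convex hull S" "A0 = l *\<^sub>R B + (1 - l) *\<^sub>R C"
    using A0 B by blast
  have CK: "C \<in> pi_cone K" using hull_pi[OF K S] lC(3) by blast
  have BK: "B \<in> pi_cone K" using S B by blast
  show ?thesis
  proof clarify
    fix x assume x: "x \<in> F"
    show "B *v x \<in> F"
    proof (rule face_heredity[OF K F BK CK lC(1), of "1 - l" x])
      show "0 \<le> 1 - l" using lC(2) by simp
      show "(l *\<^sub>R B + (1 - l) *\<^sub>R C) *v y \<in> F" if "y \<in> F" for y
        using P lC(4) that by auto
    qed (rule x)
  qed
qed

theorem partI:
  fixes K :: "(real ^ 'n::finite) set" and M :: "(real ^ 'n ^ 'n) set"
  assumes K: "proper_cone K" and Mne: "M \<noteq> {}" and D: "dsg M \<subseteq> pi_cone K"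
  shows "dsg_irreducible K M \<longleftrightarrow> (\<exists>A\<in>convex hull M. K_irreducible K A)"
proof
  assume "\<exists>A\<in>convex hull M. K_irreducible K A"
  then show "dsg_irreducible K M"
    unfolding dsg_irreducible_def using dsg_step_1[of M] by (metis One_nat_def zero_less_one)
next
  have MK: "M \<subseteq> pi_cone K" using D dsg_step_1[of M] unfolding dsg_def by blast
  assume "dsg_irreducible K M"
  then obtain t A where t: "t > 0" and A: "A \<in> convex hull (dsg_step M t)" and irr: "K_irreducible K A"
    unfolding dsg_irreducible_def by blast
  show "\<exists>A\<in>convex hull M. K_irreducible K A"
  proof (rule ccontr)
    assume nirr: "\<not> (\<exists>A\<in>convex hull M. K_irreducible K A)"
    obtain A0 where A0: "A0 \<in> convex hull M"
      and dec: "\<forall>B\<in>M. \<exists>l C. 0 < l \<and> l \<le> 1 \<and> C \<in> convex hull M \<and> A0 = l *\<^sub>R B + (1 - l) *\<^sub>R C"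
      using relint_decomp[OF Mne] by blast
    have "A0 \<in> pi_cone K" using hull_pi[OF K MK] A0 by blast
    then obtain F where F: "nontrivial_face K F" and PF: "(\<lambda>x. A0 *v x) ` F \<subseteq> F"
      using nirr A0 unfolding K_irreducible_def by blast
    have cF: "cone_face K F" using F unfolding nontrivial_face_def by blast
    have PM: "(\<lambda>x. B *v x) ` F \<subseteq> F" if "B \<in> M" for B
      by (rule relint_face[OF K MK cF dec PF that])
    have PS: "(\<lambda>x. X *v x) ` F \<subseteq> F" if "X \<in> dsg_step M k" for k X
      using that
    proof (induction k arbitrary: X)
      case 0 then show ?case by auto
    next
      case (Suc k)
      then obtain A' B' where X: "X = A' ** B'" and A': "A' \<in> M" and B': "B' \<in> dsg_step M k" by auto
      show ?case
      proof clarify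
        fix x assume x: "x \<in> F"
        have "B' *v x \<in> F" using Suc.IH[OF B'] x by blast
        then have "A' *v (B' *v x) \<in> F" using PM[OF A'] by blast
        then show "X *v x \<in> F" unfolding X by (simp add: matrix_vector_mul_assoc[symmetric])
      qed
    qed
    have "(\<lambda>x. A *v x) ` F \<subseteq> F" by (rule hull_pres[OF face_convex[OF cF] PS A])
    then show False using irr F unfolding K_irreducible_def by blast
  qed
qed




lemma compact_bound:
  fixes M :: "(real^'n::finite^'n) set"
  assumes "compact M"
  obtains L where "L > 0" "\<And>C. C \<in> M \<Longrightarrow> norm (m2b C) \<le> L"
proof -
  have "compact (m2b ` M)"
    by (rule compact_continuous_image[OF linear_continuous_on[OF bounded_linear_m2b] assms])
  then obtain a where a: "\<And>x. x \<in> m2b ` M \<Longrightarrow> norm x \<le> a"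
    using compact_imp_bounded bounded_iff by metis
  show ?thesis
  proof (rule that[of "max a 1"])
    fix C assume "C \<in> M"
    then have "norm (m2b C) \<le> a" using a by blast
    then show "norm (m2b C) \<le> max a 1" by simp
  qed simp
qed

lemma csg_step_sub: "t \<ge> 0 \<Longrightarrow> csg_step M t \<subseteq> csg M"
  unfolding csg_def by auto

theorem partII1:
  fixes K :: "(real ^ 'n::finite) set" and M :: "(real ^ 'n ^ 'n) set"
  assumes K: "proper_cone K" and cM: "compact M" and Mne: "M \<noteq> {}" and CS: "csg M \<subseteq> pi_cone K"
  shows "csg_irreducible K M \<longleftrightarrow>
    (\<forall>F. nontrivial_face K F \<longrightarrow> (\<exists>A\<in>M. \<not> (\<lambda>x. A *v x) ` span F \<subseteq> span F))"
proof -
  obtain L where L: "L > 0" "\<And>C. C \<in> M \<Longrightarrow> norm (m2b C) \<le> L"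
    using compact_bound[OF cM] by blast
  have SK: "csg_step M t \<subseteq> pi_cone K" if "t \<ge> 0" for t
    using csg_step_sub[OF that] CS by blast
  show ?thesis
  proof
    assume "csg_irreducible K M"
    then obtain t A where t: "t > 0" and A: "A \<in> convex hull (csg_step M t)" and irr: "K_irreducible K A"
      unfolding csg_irreducible_def by blast
    show "\<forall>F. nontrivial_face K F \<longrightarrow> (\<exists>A\<in>M. \<not> (\<lambda>x. A *v x) ` span F \<subseteq> span F)"
    proof (rule ccontr)
      assume "\<not> ?thesis"
      then obtain F where F: "nontrivial_face K F" and inv: "\<And>C. C \<in> M \<Longrightarrow> (\<lambda>x. C *v x) ` span F \<subseteq> span F"
        by blast
      have cF: "cone_face K F" using F unfolding nontrivial_face_def by blast
      have PS: "(\<lambda>x. X *v x) ` F \<subseteq> F" if X: "X \<in> csg_step M t" for X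
      proof -
        obtain \<sigma> \<Phi> where XP: "X = \<Phi> t" and sm: "\<forall>s\<in>{0..t}. \<sigma> s \<in> M"
          and cont: "continuous_on {0..t} \<Phi>"
          and int: "\<forall>s\<in>{0..t}. ((\<lambda>r. \<sigma> r ** \<Phi> r) has_integral (\<Phi> s - mat 1)) {0..s}"
          using X unfolding csg_step_def by blast
        have "X *v v \<in> span F" if v: "v \<in> span F" for v
          unfolding XP
        proof (rule flow_inv[OF subspace_span, where \<sigma>=\<sigma> and L=L and t=t])
          show "\<sigma> s *v w \<in> span F" if "s \<in> {0..t}" "w \<in> span F" for s w
            using inv[of "\<sigma> s"] sm that by blast
          show "norm (m2b (\<sigma> s)) \<le> L" if "s \<in> {0..t}" for s using L(2) sm that by blast
          show "((\<lambda>r. \<sigma> r ** \<Phi> r) has_integral (\<Phi> s - mat 1)) {0..s}" if "s \<in> {0..t}" for s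
            using int that by blast
        qed (use cont v t in auto)
        then have "(\<lambda>x. X *v x) ` span F \<subseteq> span F" by blast
        moreover have "X \<in> pi_cone K" using SK[of t] t X by auto
        ultimately show ?thesis using pres_span_iff[OF K cF] by blast
      qed
      have "(\<lambda>x. A *v x) ` F \<subseteq> F" by (rule hull_pres[OF face_convex[OF cF] PS A])
      then show False using irr F unfolding K_irreducible_def by blast
    qed
  next
    assume cond: "\<forall>F. nontrivial_face K F \<longrightarrow> (\<exists>A\<in>M. \<not> (\<lambda>x. A *v x) ` span F \<subseteq> span F)"
    define t where "t = 1 / (4 * L)"
    have t: "t > 0" unfolding t_def using L by simp
    define S where "S = csg_step M t"
    obtain C0 where "C0 \<in> M" using Mne by blast
    then have "mexp (t *\<^sub>R C0) \<in> S" unfolding S_def by (rule mexp_in_csg)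
    then have Sne: "S \<noteq> {}" by blast
    have SK': "S \<subseteq> pi_cone K" unfolding S_def using SK t by simp
    obtain A0 where A0: "A0 \<in> convex hull S"
      and dec: "\<forall>B\<in>S. \<exists>l C. 0 < l \<and> l \<le> 1 \<and> C \<in> convex hull S \<and> A0 = l *\<^sub>R B + (1 - l) *\<^sub>R C"
      using relint_decomp[OF Sne] by blast
    show "csg_irreducible K M"
    proof (cases "K_irreducible K A0")
      case True
      then show ?thesis unfolding csg_irreducible_def using t A0 S_def by blast
    next
      case False
      have "A0 \<in> pi_cone K" using hull_pi[OF K SK'] A0 by blast
      then obtain F where F: "nontrivial_face K F" and PF: "(\<lambda>x. A0 *v x) ` F \<subseteq> F"
        using False unfolding K_irreducible_def by blast
      have cF: "cone_face K F" using F unfolding nontrivial_face_def by blast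
      obtain C where C: "C \<in> M" and nC: "\<not> (\<lambda>x. C *v x) ` span F \<subseteq> span F"
        using cond F by blast
      have ES: "mexp (t *\<^sub>R C) \<in> S" unfolding S_def by (rule mexp_in_csg[OF C])
      have "(\<lambda>x. mexp (t *\<^sub>R C) *v x) ` F \<subseteq> F" by (rule relint_face[OF K SK' cF dec PF ES])
      then have Esp: "(\<lambda>x. mexp (t *\<^sub>R C) *v x) ` span F \<subseteq> span F"
        using pres_span_iff[OF K cF] SK' ES by blast
      have nX: "norm (t *\<^sub>R m2b C) \<le> 1/4"
      proof -
        have "norm (t *\<^sub>R m2b C) = t * norm (m2b C)" using t by simp
        also have "\<dots> \<le> t * L" using L(2)[OF C] t by (simp add: mult_left_mono)
        also have "\<dots> = 1/4" unfolding t_def using L by simp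
        finally show ?thesis .
      qed
      have "C *v v \<in> span F" if v: "v \<in> span F" for v
      proof -
        have "app (t *\<^sub>R m2b C) v \<in> span F"
        proof (rule exp_small_inv[OF subspace_span nX _ v])
          fix w assume "w \<in> span F"
          then have "mexp (t *\<^sub>R C) *v w \<in> span F" using Esp by blast
          then show "app (exp (t *\<^sub>R m2b C)) w \<in> span F" by (simp add: mexp_apply m2b_scaleR)
        qed
        then have "t *\<^sub>R (C *v v) \<in> span F" by (simp add: app_scaleR_left)
        then have "(1/t) *\<^sub>R (t *\<^sub>R (C *v v)) \<in> span F" by (rule span_mul)
        then show ?thesis using t by simp
      qed
      then show ?thesis using nC by blast
    qed
  qed
qed




lemma lam_convex:
  assumes K: "proper_cone K"
  shows "convex {B + c *\<^sub>R mat 1 | B c. B \<in> pi_cone K}"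
proof (rule convexI)
  fix x y :: "real^'a^'a" and u v :: real
  assume "x \<in> {B + c *\<^sub>R mat 1 | B c. B \<in> pi_cone K}" "y \<in> {B + c *\<^sub>R mat 1 | B c. B \<in> pi_cone K}"
    and uv: "0 \<le> u" "0 \<le> v" "u + v = 1"
  then obtain B1 c1 B2 c2 where x: "x = B1 + c1 *\<^sub>R mat 1" "B1 \<in> pi_cone K"
    and y: "y = B2 + c2 *\<^sub>R mat 1" "B2 \<in> pi_cone K" by blast
  have "u *\<^sub>R B1 + v *\<^sub>R B2 \<in> pi_cone K"
    using pi_cone_convex[OF K] x(2) y(2) uv unfolding convex_def by blast
  moreover have "u *\<^sub>R x + v *\<^sub>R y = (u *\<^sub>R B1 + v *\<^sub>R B2) + (u * c1 + v * c2) *\<^sub>R mat 1"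
    unfolding x y by (simp add: algebra_simps)
  ultimately show "u *\<^sub>R x + v *\<^sub>R y \<in> {B + c *\<^sub>R mat 1 | B c. B \<in> pi_cone K}" by blast
qed

lemma pres_span_convex:
  fixes F :: "(real^'n::finite) set"
  shows "convex {A::real^'n^'n. (\<lambda>x. A *v x) ` span F \<subseteq> span F}"
  by (rule pres_convex[OF subspace_imp_convex[OF subspace_span]])

lemma exp_nonneg_shift:
  fixes K :: "(real^'n::finite) set"
  assumes K: "proper_cone K" and B: "B \<in> pi_cone K"
  shows "exp_K_nonneg K (B + c *\<^sub>R mat 1)"
  unfolding exp_K_nonneg_def
proof (intro allI impI ballI)
  note kb = pc_basic[OF K]
  fix t :: real and x assume t: "t \<ge> 0" and x: "x \<in> K"
  have "m2b (t *\<^sub>R (B + c *\<^sub>R mat 1)) = t *\<^sub>R m2b B + (t * c) *\<^sub>R 1"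
    by (simp add: m2b_scaleR m2b_add m2b_one scaleR_add_right)
  then have "mexp (t *\<^sub>R (B + c *\<^sub>R mat 1)) *v x = exp (t * c) *\<^sub>R app (exp (t *\<^sub>R m2b B)) x"
    by (simp add: mexp_apply exp_shift app_scaleR_left)
  moreover have "app (exp (t *\<^sub>R m2b B)) x \<in> K"
  proof (rule exp_preserves[OF kb _ x])
    fix y assume "y \<in> K"
    then have "B *v y \<in> K" using B unfolding pi_cone_def by blast
    then show "app (t *\<^sub>R m2b B) y \<in> K" using kb(4)[OF t] by (simp add: app_scaleR_left)
  qed
  ultimately show "mexp (t *\<^sub>R (B + c *\<^sub>R mat 1)) *v x \<in> K" using kb(4) by simp
qed

theorem partII2:
  fixes K :: "(real ^ 'n::finite) set" and M :: "(real ^ 'n ^ 'n) set"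
  assumes K: "proper_cone K" and Mne: "M \<noteq> {}" and Mlam: "M \<subseteq> {B + c *\<^sub>R mat 1 | B c. B \<in> pi_cone K}"
  shows "(\<forall>F. nontrivial_face K F \<longrightarrow> (\<exists>A\<in>M. \<not> (\<lambda>x. A *v x) ` span F \<subseteq> span F))
         \<longleftrightarrow> (\<exists>A\<in>convex hull M. exp_K_nonneg K A \<and>
                (\<forall>F. nontrivial_face K F \<longrightarrow> \<not> (\<lambda>x. A *v x) ` span F \<subseteq> span F))"
proof
  assume "\<exists>A\<in>convex hull M. exp_K_nonneg K A \<and>
                (\<forall>F. nontrivial_face K F \<longrightarrow> \<not> (\<lambda>x. A *v x) ` span F \<subseteq> span F)"
  then obtain A where A: "A \<in> convex hull M" and nA: "\<And>F. nontrivial_face K F \<Longrightarrow> \<not> (\<lambda>x. A *v x) ` span F \<subseteq> span F"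
    by blast
  show "\<forall>F. nontrivial_face K F \<longrightarrow> (\<exists>A\<in>M. \<not> (\<lambda>x. A *v x) ` span F \<subseteq> span F)"
  proof (intro allI impI, rule ccontr)
    fix F assume F: "nontrivial_face K F" and "\<not> (\<exists>A\<in>M. \<not> (\<lambda>x. A *v x) ` span F \<subseteq> span F)"
    then have "M \<subseteq> {A::real^'n^'n. (\<lambda>x. A *v x) ` span F \<subseteq> span F}" by blast
    then have "convex hull M \<subseteq> {A::real^'n^'n. (\<lambda>x. A *v x) ` span F \<subseteq> span F}"
      by (rule hull_minimal[where S=convex, OF _ pres_span_convex])
    then show False using A nA[OF F] by blast
  qed
next
  assume cond: "\<forall>F. nontrivial_face K F \<longrightarrow> (\<exists>A\<in>M. \<not> (\<lambda>x. A *v x) ` span F \<subseteq> span F)"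
  define Lam where "Lam = {B + c *\<^sub>R mat 1 | B c. B \<in> pi_cone K}"
  have hL: "convex hull M \<subseteq> Lam" unfolding Lam_def
    by (rule hull_minimal[where S=convex, OF Mlam lam_convex[OF K]])
  obtain A0 where A0: "A0 \<in> convex hull M"
    and dec: "\<forall>B\<in>M. \<exists>l C. 0 < l \<and> l \<le> 1 \<and> C \<in> convex hull M \<and> A0 = l *\<^sub>R B + (1 - l) *\<^sub>R C"
    using relint_decomp[OF Mne] by blast
  have "A0 \<in> Lam" using hL A0 by blast
  then obtain B0 c0 where B0: "A0 = B0 + c0 *\<^sub>R mat 1" "B0 \<in> pi_cone K" unfolding Lam_def by blast
  have en: "exp_K_nonneg K A0" unfolding B0(1) by (rule exp_nonneg_shift[OF K B0(2)])
  have irr: "\<not> (\<lambda>x. A0 *v x) ` span F \<subseteq> span F" if F: "nontrivial_face K F" for F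
  proof
    assume P: "(\<lambda>x. A0 *v x) ` span F \<subseteq> span F"
    have cF: "cone_face K F" using F unfolding nontrivial_face_def by blast
    obtain B where BM: "B \<in> M" and nB: "\<not> (\<lambda>x. B *v x) ` span F \<subseteq> span F" using cond F by blast
    obtain l C where lC: "0 < l" "l \<le> 1" "C \<in> convex hull M" "A0 = l *\<^sub>R B + (1 - l) *\<^sub>R C"
      using dec BM by blast
    obtain B1 c1 where B1: "B = B1 + c1 *\<^sub>R mat 1" "B1 \<in> pi_cone K" using Mlam BM by blast
    obtain B2 c2 where B2: "C = B2 + c2 *\<^sub>R mat 1" "B2 \<in> pi_cone K" using hL lC(3) unfolding Lam_def by blast
    define c where "c = l * c1 + (1 - l) * c2"
    define D where "D = l *\<^sub>R B1 + (1 - l) *\<^sub>R B2"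
    have AD: "A0 = D + c *\<^sub>R mat 1" unfolding lC(4) B1(1) B2(1) D_def c_def by (simp add: algebra_simps)
    have DK: "D \<in> pi_cone K" unfolding D_def
      using pi_cone_convex[OF K] B1(2) B2(2) lC(1,2) unfolding convex_def by simp
    have Dsp: "(\<lambda>x. D *v x) ` span F \<subseteq> span F"
    proof clarify
      fix v assume v: "v \<in> span F"
      have "D *v v = A0 *v v - c *\<^sub>R v" unfolding AD
        by (simp add: matrix_vector_mult_add_rdistrib scaleR_matrix_vector_assoc[symmetric])
      moreover have "A0 *v v \<in> span F" using P v by blast
      ultimately show "D *v v \<in> span F" using v by (simp add: span_diff span_mul)
    qed
    then have DF: "(\<lambda>x. D *v x) ` F \<subseteq> F" using pres_span_iff[OF K cF DK] by blast
    have B1F: "(\<lambda>x. B1 *v x) ` F \<subseteq> F"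
    proof clarify
      fix x assume x: "x \<in> F"
      show "B1 *v x \<in> F"
      proof (rule face_heredity[OF K cF B1(2) B2(2) lC(1), of "1 - l" x])
        show "0 \<le> 1 - l" using lC(2) by simp
        show "(l *\<^sub>R B1 + (1 - l) *\<^sub>R B2) *v y \<in> F" if "y \<in> F" for y
          using DF that unfolding D_def by blast
      qed (rule x)
    qed
    then have "(\<lambda>x. B1 *v x) ` span F \<subseteq> span F" using pres_span_iff[OF K cF B1(2)] by blast
    then have "(\<lambda>x. B *v x) ` span F \<subseteq> span F"
    proof clarify
      fix v assume h: "(\<lambda>x. B1 *v x) ` span F \<subseteq> span F" and v: "v \<in> span F"
      have "B *v v = B1 *v v + c1 *\<^sub>R v" unfolding B1(1)
        by (simp add: matrix_vector_mult_add_rdistrib scaleR_matrix_vector_assoc[symmetric])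
      then show "B *v v \<in> span F" using h v by (simp add: span_add span_mul image_subset_iff)
    qed
    then show False using nB by blast
  qed
  show "\<exists>A\<in>convex hull M. exp_K_nonneg K A \<and>
                (\<forall>F. nontrivial_face K F \<longrightarrow> \<not> (\<lambda>x. A *v x) ` span F \<subseteq> span F)"
    using A0 en irr by blast
qed


theorem mainTheorem5:
  fixes K :: "(real ^ 'n) set" and M :: "(real ^ 'n ^ 'n) set"
  assumes "proper_cone K" and "compact M" and "M \<noteq> {}"
  shows "(dsg M \<subseteq> pi_cone K \<longrightarrow>
            (dsg_irreducible K M \<longleftrightarrow> (\<exists>A\<in>convex hull M. K_irreducible K A)))
       \<and> (csg M \<subseteq> pi_cone K \<longrightarrow>
            ((csg_irreducible K M \<longleftrightarrow>
                (\<forall>F. nontrivial_face K F \<longrightarrow> (\<exists>A\<in>M. \<not> (\<lambda>x. A *v x) ` span F \<subseteq> span F)))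
             \<and> (M \<subseteq> {B + c *\<^sub>R mat 1 | B c. B \<in> pi_cone K} \<longrightarrow>
                 ((\<forall>F. nontrivial_face K F \<longrightarrow> (\<exists>A\<in>M. \<not> (\<lambda>x. A *v x) ` span F \<subseteq> span F))
                  \<longleftrightarrow> (\<exists>A\<in>convex hull M. exp_K_nonneg K A \<and>
                        (\<forall>F. nontrivial_face K F \<longrightarrow> \<not> (\<lambda>x. A *v x) ` span F \<subseteq> span F))))))"
  apply (intro conjI impI)
    apply (erule partI[OF assms(1) assms(3)])
   apply (erule partII1[OF assms(1) assms(2) assms(3)])
  apply (rule partII2[OF assms(1) assms(3)], assumption)
  done

end
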